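(* For every integer $n\geq 5$, $\pi(\overline{C_n})=4$.
   Context: $C_n$ is the cycle on vertices $v_1,\dots,v_n$ (with $v_i$ adjacent to $v_{i+1}$, indices mod $n$), and $\overline{C_n}$ is its complement: two distinct vertices are adjacent in $\overline{C_n}$ iff they are not adjacent in $C_n$; for $n\geq 5$ it is connected. For a connected graph $G$, $d(x,y)$ denotes the graph distance. For a permutation $f$ of $V(G)$ and distinct vertices $x,y$, let $\delta_f(x,y)=|d(x,y)-d(f(x),f(y))|$, and let $\delta_f(G)=\sum \delta_f(x,y)$, the sum over all unordered pairs $\{x,y\}$ of distinct vertices. $\pi(G)$ denotes the smallest positive value of $\delta_f(G)$ over all permutations $f$ of $V(G)$. *)

theory Defs
  imports "HOL-Combinatorics.Permutations"
begin

text \<open>Graphs on the vertex set V (natural numbers) given by a symmetric edge relation E.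
  The cycle C_n has vertices 0..n-1 (v_{i+1} is vertex i), with i adjacent to (i+1) mod n.\<close>

definition cycle_adj :: "nat \<Rightarrow> nat \<Rightarrow> nat \<Rightarrow> bool" where
  "cycle_adj n x y \<longleftrightarrow> x < n \<and> y < n \<and> x \<noteq> y \<and> (y = (x + 1) mod n \<or> x = (y + 1) mod n)"

definition co_cycle_adj :: "nat \<Rightarrow> nat \<Rightarrow> nat \<Rightarrow> bool" where
  "co_cycle_adj n x y \<longleftrightarrow> x < n \<and> y < n \<and> x \<noteq> y \<and> \<not> cycle_adj n x y"

definition gdist :: "(nat \<Rightarrow> nat \<Rightarrow> bool) \<Rightarrow> nat \<Rightarrow> nat \<Rightarrow> nat" where
  "gdist E x y = (LEAST k. \<exists>p. length p = Suc k \<and> hd p = x \<and> last p = y \<and>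
                      (\<forall>i<k. E (p ! i) (p ! Suc i)))"

definition delta_pair :: "(nat \<Rightarrow> nat \<Rightarrow> bool) \<Rightarrow> (nat \<Rightarrow> nat) \<Rightarrow> nat \<Rightarrow> nat \<Rightarrow> nat" where
  "delta_pair E f x y = nat \<bar>int (gdist E x y) - int (gdist E (f x) (f y))\<bar>"

definition delta_total :: "nat set \<Rightarrow> (nat \<Rightarrow> nat \<Rightarrow> bool) \<Rightarrow> (nat \<Rightarrow> nat) \<Rightarrow> nat" where
  "delta_total V E f = (\<Sum>(x, y) \<in> {(x, y). x \<in> V \<and> y \<in> V \<and> x < y}. delta_pair E f x y)"

definition pi_graph :: "nat set \<Rightarrow> (nat \<Rightarrow> nat \<Rightarrow> bool) \<Rightarrow> nat" where
  "pi_graph V E = (LEAST s. s > 0 \<and> (\<exists>f. f permutes V \<and> delta_total V E f = s))"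

end

theory Submission
  imports Defs
begin


lemma cyc:
  assumes "n \<ge> 3" "x < n" "y < n"
  shows "cycle_adj n x y \<longleftrightarrow> (y = x+1 \<or> x = y+1 \<or> (x=0 \<and> y=n-1) \<or> (y=0 \<and> x = n-1))"
proof -
  have a: "(x+1) mod n = (if x+1 = n then 0 else x+1)" using assms by auto
  have b: "(y+1) mod n = (if y+1 = n then 0 else y+1)" using assms by auto
  show ?thesis unfolding cycle_adj_def a b using assms by auto
qed

lemma cyc_sym: "cycle_adj n x y \<longleftrightarrow> cycle_adj n y x"
  unfolding cycle_adj_def by auto

lemma mid_arith: "\<lbrakk>5 \<le> (n::nat); x < n; y < n;
      y = x + 1 \<or> x = n - 1 \<and> y = 0;
      z = (if x + 3 < n then x + 3 else x + 3 - n)\<rbrakk>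
     \<Longrightarrow> z \<noteq> x \<and> z \<noteq> y \<and> \<not> (z = x+1 \<or> x = z+1 \<or> (x=0 \<and> z=n-1) \<or> (z=0 \<and> x = n-1))
             \<and> \<not> (y = z+1 \<or> z = y+1 \<or> (z=0 \<and> y=n-1) \<or> (y=0 \<and> z = n-1))"
  by (cases "x + 3 < n"; elim disjE conjE; simp; linarith)

lemma mid:
  assumes "5 \<le> n" "x < n" "y < n" "y = x + 1 \<or> x = n - 1 \<and> y = 0"
  shows "\<exists>z<n. z \<noteq> x \<and> z \<noteq> y \<and> \<not> cycle_adj n x z \<and> \<not> cycle_adj n y z"
proof -
  define z where "z = (if x + 3 < n then x + 3 else x + 3 - n)"
  have zn: "z < n" using z_def assms by auto
  have "z \<noteq> x \<and> z \<noteq> y \<and> \<not> cycle_adj n x z \<and> \<not> cycle_adj n y z"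
    using mid_arith[OF assms z_def] cyc[of n x z] cyc[of n y z] assms zn by simp
  then show ?thesis using zn by blast
qed

definition gd :: "nat \<Rightarrow> nat \<Rightarrow> nat \<Rightarrow> nat" where
  "gd n x y = (if x = y then 0 else if cycle_adj n x y then 2 else 1)"

lemma gdist_co:
  assumes n: "n \<ge> 5" and xy: "x < n" "y < n"
  shows "gdist (co_cycle_adj n) x y = gd n x y"
proof -
  let ?P = "\<lambda>k. \<exists>p. length p = Suc k \<and> hd p = x \<and> last p = y \<and>
                      (\<forall>i<k. co_cycle_adj n (p ! i) (p ! Suc i))"
  have nP0: "\<not> ?P 0" if "x \<noteq> y"
  proof
    assume "?P 0"
    then obtain p where "length p = 1" "hd p = x" "last p = y" by auto
    then show False using that by (cases p) auto
  qed
  show ?thesis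
  proof (cases "x = y")
    case True
    have "?P 0" by (rule exI[of _ "[x]"]) (simp add: True)
    then show ?thesis unfolding gdist_def gd_def using True by (simp add: Least_eq_0)
  next
    case ne: False
    show ?thesis
    proof (cases "cycle_adj n x y")
      case False
      have "?P 1" by (rule exI[of _ "[x,y]"]) (use False ne xy in \<open>simp add: co_cycle_adj_def\<close>)
      then have "(LEAST k. ?P k) = 1"
        by (intro Least_equality) (use nP0[OF ne] in \<open>auto simp: not_less_eq_eq\<close>)
      then show ?thesis unfolding gdist_def gd_def using ne False by simp
    next
      case True
      have cx: "(y = x+1 \<or> x = y+1 \<or> (x=0 \<and> y=n-1) \<or> (y=0 \<and> x = n-1))"
        using cyc[of n x y] True n xy by simp
      have "\<exists>z<n. z \<noteq> x \<and> z \<noteq> y \<and> \<not> cycle_adj n x z \<and> \<not> cycle_adj n z y"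
      proof (cases "y = x + 1 \<or> x = n - 1 \<and> y = 0")
        case True
        then obtain z where "z < n" "z \<noteq> x" "z \<noteq> y" "\<not> cycle_adj n x z" "\<not> cycle_adj n y z"
          using mid[of n x y] n xy by blast
        then show ?thesis using cyc_sym by blast
      next
        case False
        then have "x = y + 1 \<or> y = n - 1 \<and> x = 0" using cx by auto
        then obtain z where "z < n" "z \<noteq> x" "z \<noteq> y" "\<not> cycle_adj n y z" "\<not> cycle_adj n x z"
          using mid[of n y x] n xy by blast
        then show ?thesis using cyc_sym by blast
      qed
      then obtain z where z: "z < n" "z \<noteq> x" "z \<noteq> y" "\<not> cycle_adj n x z" "\<not> cycle_adj n z y"
        by blast
      have P2: "?P 2"
        by (rule exI[of _ "[x,z,y]"]) (use z xy in \<open>auto simp: co_cycle_adj_def less_Suc_eq numeral_2_eq_2\<close>)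
      have nP1: "\<not> ?P 1"
      proof
        assume "?P 1"
        then obtain p where p: "length p = Suc (Suc 0)" "hd p = x" "last p = y" "co_cycle_adj n (p!0) (p!1)"
          by auto
        then have "p \<noteq> []" by auto
        then have "p!0 = x" "p!1 = y" using p by (simp_all add: hd_conv_nth[symmetric] last_conv_nth)
        then show False using p True by (auto simp: co_cycle_adj_def)
      qed
      have "(LEAST k. ?P k) = 2"
      proof (rule Least_equality[where P = ?P, OF P2])
        fix k assume "?P k"
        then show "2 \<le> k" using nP0[OF ne] nP1
          by (cases k; cases "k - 1") auto
      qed
      then show ?thesis unfolding gdist_def gd_def using ne True by simp
    qed
  qed
qed



lemma pin: "f permutes {..<n} \<Longrightarrow> x < n \<Longrightarrow> f x < n"
  using permutes_in_image[of f "{..<n}" x] by auto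

definition disc :: "nat \<Rightarrow> (nat \<Rightarrow> nat) \<Rightarrow> nat \<Rightarrow> nat \<Rightarrow> bool" where
  "disc n f x y \<longleftrightarrow> cycle_adj n x y \<noteq> cycle_adj n (f x) (f y)"

definition UU :: "nat \<Rightarrow> (nat \<Rightarrow> nat) \<Rightarrow> (nat \<times> nat) set" where
  "UU n f = {(x,y). x < n \<and> y < n \<and> x < y \<and> disc n f x y}"

lemma dp:
  assumes n: "n \<ge> 5" and f: "f permutes {..<n}" and xy: "x < n" "y < n" "x \<noteq> y"
  shows "delta_pair (co_cycle_adj n) f x y = of_bool (disc n f x y)"
proof -
  have fx: "f x < n" "f y < n" using permutes_in_image[OF f, of x] permutes_in_image[OF f, of y] xy by auto
  have "f x \<noteq> f y" using permutes_inj[OF f] xy by (auto dest: injD)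
  then show ?thesis
    unfolding delta_pair_def using gdist_co[OF n xy(1,2)] gdist_co[OF n fx]
    by (auto simp: gd_def disc_def xy)
qed

lemma dt:
  assumes n: "n \<ge> 5" and f: "f permutes {..<n}"
  shows "delta_total {..<n} (co_cycle_adj n) f = card (UU n f)"
proof -
  let ?S = "{(x, y). x \<in> {..<n} \<and> y \<in> {..<n} \<and> x < y}"
  have fin: "finite ?S" by (rule finite_subset[of _ "{..<n} \<times> {..<n}"]) auto
  have "delta_total {..<n} (co_cycle_adj n) f = (\<Sum>p\<in>?S. of_bool (disc n f (fst p) (snd p)))"
    unfolding delta_total_def
  proof (rule sum.cong[OF refl])
    fix p assume "p \<in> ?S"
    then obtain x y where "p = (x,y)" "x < n" "y < n" "x < y" by auto
    then show "(case p of (x, y) \<Rightarrow> delta_pair (co_cycle_adj n) f x y) = of_bool (disc n f (fst p) (snd p))"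
      using dp[OF n f, of x y] by simp
  qed
  also have "\<dots> = card (?S \<inter> {p. disc n f (fst p) (snd p)})"
    using fin by simp
  also have "?S \<inter> {p. disc n f (fst p) (snd p)} = UU n f" unfolding UU_def by auto
  finally show ?thesis .
qed

lemma Lle:
  fixes n :: nat
  assumes g: "g permutes {..<n}" and sym: "\<And>a b. P a b \<longleftrightarrow> P b a"
  shows "card {(x,y). x < y \<and> y < n \<and> P (g x) (g y)} \<le> card {(x,y). x < y \<and> y < n \<and> P x y}"
proof (rule card_inj_on_le[where f = "\<lambda>(x,y). (min (g x) (g y), max (g x) (g y))"])
  have inj: "inj g" using permutes_inj[OF g] .
  show "inj_on (\<lambda>(x,y). (min (g x) (g y), max (g x) (g y))) {(x,y). x < y \<and> y < n \<and> P (g x) (g y)}"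
  proof (rule inj_onI)
    fix p q assume p: "p \<in> {(x,y). x < y \<and> y < n \<and> P (g x) (g y)}"
      and q: "q \<in> {(x,y). x < y \<and> y < n \<and> P (g x) (g y)}"
      and e: "(\<lambda>(x,y). (min (g x) (g y), max (g x) (g y))) p = (\<lambda>(x,y). (min (g x) (g y), max (g x) (g y))) q"
    obtain a b where ab: "p = (a,b)" "a < b" using p by auto
    obtain c d where cd: "q = (c,d)" "c < d" using q by auto
    have "(g a = g c \<and> g b = g d) \<or> (g a = g d \<and> g b = g c)"
      using e ab cd by (auto simp: min_def max_def split: if_splits)
    then have "(a = c \<and> b = d) \<or> (a = d \<and> b = c)" using inj by (auto dest: injD)
    then show "p = q" using ab cd by (metis less_asym)
  qed
  show "(\<lambda>(x,y). (min (g x) (g y), max (g x) (g y))) ` {(x,y). x < y \<and> y < n \<and> P (g x) (g y)}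
        \<subseteq> {(x,y). x < y \<and> y < n \<and> P x y}"
  proof clarify
    fix a b assume ab: "a < b" "b < n" "P (g a) (g b)"
    then have "g a < n" "g b < n" using pin[OF g] by auto
    moreover have "g a \<noteq> g b" using inj ab by (auto dest: injD)
    ultimately show "min (g a) (g b) < max (g a) (g b) \<and> max (g a) (g b) < n \<and> P (min (g a) (g b)) (max (g a) (g b))"
      using ab sym by (auto simp: min_def max_def)
  qed
  show "finite {(x,y). x < y \<and> y < n \<and> P x y}"
    by (rule finite_subset[of _ "{..<n} \<times> {..<n}"]) auto
qed

lemma L1:
  assumes f: "f permutes {..<n}"
  shows "card {(x,y). x < y \<and> y < n \<and> cycle_adj n (f x) (f y)} = card {(x,y). x < y \<and> y < n \<and> cycle_adj n x y}"
proof (rule antisym)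
  show "card {(x,y). x < y \<and> y < n \<and> cycle_adj n (f x) (f y)} \<le> card {(x,y). x < y \<and> y < n \<and> cycle_adj n x y}"
    by (rule Lle[OF f]) (rule cyc_sym)
  have "card {(x,y). x < y \<and> y < n \<and> cycle_adj n (f (inv f x)) (f (inv f y))} \<le> card {(x,y). x < y \<and> y < n \<and> cycle_adj n (f x) (f y)}"
    by (rule Lle[OF permutes_inv[OF f]]) (rule cyc_sym)
  moreover have "\<And>x. f (inv f x) = x" using permutes_inverses(1)[OF f] .
  ultimately show "card {(x,y). x < y \<and> y < n \<and> cycle_adj n x y} \<le> card {(x,y). x < y \<and> y < n \<and> cycle_adj n (f x) (f y)}"
    by simp
qed

lemma even_UU:
  assumes f: "f permutes {..<n}"
  shows "even (card (UU n f))"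
proof -
  define A where "A = {(x,y). x < y \<and> y < n \<and> cycle_adj n x y}"
  define B where "B = {(x,y). x < y \<and> y < n \<and> cycle_adj n (f x) (f y)}"
  have finA: "finite A" unfolding A_def by (rule finite_subset[of _ "{..<n} \<times> {..<n}"]) auto
  have finB: "finite B" unfolding B_def by (rule finite_subset[of _ "{..<n} \<times> {..<n}"]) auto
  have cAB: "card A = card B" unfolding A_def B_def using L1[OF f] by simp
  have U: "UU n f = (A - B) \<union> (B - A)" unfolding UU_def A_def B_def disc_def by auto
  have "card (UU n f) = card (A - B) + card (B - A)"
    unfolding U by (rule card_Un_disjoint) (use finA finB in auto)
  also have "\<dots> = 2 * (card A - card (A \<inter> B))"
    using card_Diff_subset_Int[of A B] card_Diff_subset_Int[of B A] finA finB cAB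
    by (simp add: Int_commute)
  finally show ?thesis by simp
qed

lemma deg_c:
  assumes n: "n \<ge> 5" and w: "w < n"
  shows "card {y. y < n \<and> cycle_adj n w y} = 2"
proof -
  define a where "a = (if w + 1 = n then 0 else w + 1)"
  define b where "b = (if w = 0 then n - 1 else w - 1)"
  have "{y. y < n \<and> cycle_adj n w y} = {a, b}"
    using n w by (auto simp: cyc a_def b_def)
  moreover have "a \<noteq> b" using n w unfolding a_def b_def by auto
  ultimately show ?thesis by simp
qed

lemma deg_c':
  assumes n: "n \<ge> 5" and w: "w < n" and f: "f permutes {..<n}"
  shows "card {y. y < n \<and> cycle_adj n (f w) (f y)} = 2"
proof -
  have "f ` {y. y < n \<and> cycle_adj n (f w) (f y)} = {y. y < n \<and> cycle_adj n (f w) y}"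
  proof (intro equalityI subsetI)
    fix y assume "y \<in> f ` {y. y < n \<and> cycle_adj n (f w) (f y)}"
    then show "y \<in> {y. y < n \<and> cycle_adj n (f w) y}" using f by (auto intro: pin)
  next
    fix y assume y: "y \<in> {y. y < n \<and> cycle_adj n (f w) y}"
    have "inv f y < n" using y pin[OF permutes_inv[OF f]] by auto
    moreover have "f (inv f y) = y" using permutes_inverses(1)[OF f] .
    ultimately show "y \<in> f ` {y. y < n \<and> cycle_adj n (f w) (f y)}" using y
      by (metis (mono_tags, lifting) image_eqI mem_Collect_eq)
  qed
  moreover have "inj_on f {y. y < n \<and> cycle_adj n (f w) (f y)}"
    using permutes_inj[OF f] by (auto intro: inj_on_subset)
  ultimately have "card {y. y < n \<and> cycle_adj n (f w) (f y)} = card {y. y < n \<and> cycle_adj n (f w) y}"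
    by (metis card_image)
  also have "\<dots> = 2" using deg_c[OF n pin[OF f w]] .
  finally show ?thesis .
qed

lemma other:
  assumes "finite S1" "finite S2" "card S1 = card S2" "y \<in> S1" "y \<notin> S2"
  shows "\<exists>z\<in>S2. z \<notin> S1"
proof (rule ccontr)
  assume "\<not> ?thesis"
  then have "S2 \<subseteq> S1" by auto
  then have "S2 = S1" using card_subset_eq assms by metis
  then show False using assms by auto
qed

lemma second:
  assumes n: "n \<ge> 5" and f: "f permutes {..<n}" and w: "w < n" and y: "y < n" and d: "disc n f w y"
  shows "\<exists>z<n. disc n f w z \<and> z \<noteq> y"
proof -
  let ?S1 = "{y. y < n \<and> cycle_adj n w y}"
  let ?S2 = "{y. y < n \<and> cycle_adj n (f w) (f y)}"
  have c: "card ?S1 = card ?S2" using deg_c[OF n w] deg_c'[OF n w f] by simp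
  show ?thesis
  proof (cases "cycle_adj n w y")
    case True
    then have "\<exists>z\<in>?S2. z \<notin> ?S1" using d y by (intro other[OF _ _ c]) (auto simp: disc_def)
    then show ?thesis using True by (auto simp: disc_def)
  next
    case False
    then have "\<exists>z\<in>?S1. z \<notin> ?S2" using d y by (intro other[OF _ _ c[symmetric]]) (auto simp: disc_def)
    then show ?thesis using False by (auto simp: disc_def)
  qed
qed

lemma three:
  assumes n: "n \<ge> 5" and f: "f permutes {..<n}" and ne: "UU n f \<noteq> {}"
  shows "card (UU n f) \<ge> 3"
proof -
  obtain x y where xy: "x < n" "y < n" "x < y" "disc n f x y" using ne unfolding UU_def by auto
  have dsym: "\<And>a b. disc n f a b \<longleftrightarrow> disc n f b a" unfolding disc_def using cyc_sym by metis
  have dirr: "\<And>a. \<not> disc n f a a" unfolding disc_def cycle_adj_def by auto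
  obtain z where z: "z < n" "disc n f x z" "z \<noteq> y" using second[OF n f xy(1,2,4)] by auto
  obtain w where w: "w < n" "disc n f y w" "w \<noteq> x" using second[OF n f xy(2,1)] xy(4) dsym by auto
  have "x \<noteq> z" using z dirr by auto
  have "y \<noteq> w" using w dirr by auto
  let ?p1 = "(x,y)" let ?p2 = "(min x z, max x z)" let ?p3 = "(min y w, max y w)"
  have sub: "{?p1, ?p2, ?p3} \<subseteq> UU n f"
    using xy z w \<open>x \<noteq> z\<close> \<open>y \<noteq> w\<close> dsym unfolding UU_def by (auto simp: min_def max_def)
  have "card {?p1, ?p2, ?p3} = 3"
    using xy z w \<open>x \<noteq> z\<close> \<open>y \<noteq> w\<close> by (auto simp: min_def max_def)
  moreover have "finite (UU n f)" unfolding UU_def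
    by (rule finite_subset[of _ "{..<n} \<times> {..<n}"]) auto
  ultimately show ?thesis using card_mono[OF _ sub] by simp
qed



lemma swap_disc:
  assumes n: "n \<ge> 5" and xy: "x < n" "y < n" "x < y"
  shows "disc n (transpose 0 1) x y \<longleftrightarrow> (x,y) \<in> {(1,2),(0,n-1),(0,2),(1,n-1)}"
proof -
  let ?f = "transpose (0::nat) 1"
  have f: "?f x = (if x = 0 then 1 else if x = 1 then 0 else x)" "?f y = (if y = 0 then 1 else if y = 1 then 0 else y)"
    by (auto simp: transpose_def)
  have fl: "?f x < n" "?f y < n" using xy n f by auto
  have "disc n ?f x y \<longleftrightarrow> (y = x+1 \<or> x = y+1 \<or> (x=0 \<and> y=n-1) \<or> (y=0 \<and> x = n-1)) \<noteq>
      (?f y = ?f x+1 \<or> ?f x = ?f y+1 \<or> (?f x=0 \<and> ?f y=n-1) \<or> (?f y=0 \<and> ?f x = n-1))"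
    unfolding disc_def using cyc[of n x y] cyc[of n "?f x" "?f y"] n xy fl by simp
  also have "\<dots> \<longleftrightarrow> (x,y) \<in> {(1,2),(0,n-1),(0,2),(1,n-1)}"
    unfolding f using n xy
    by (cases "x = 0"; cases "x = 1"; cases "y = 1"; simp; linarith)
  finally show ?thesis .
qed

lemma swap_UU:
  assumes n: "n \<ge> 5"
  shows "card (UU n (transpose 0 1)) = 4"
proof -
  have "UU n (transpose 0 1) = {(1,2),(0,n-1),(0,2),(1,n-1)}"
  proof (intro equalityI subsetI)
    fix p assume "p \<in> UU n (transpose 0 1)"
    then show "p \<in> {(1,2),(0,n-1),(0,2),(1,n-1)}" unfolding UU_def using swap_disc[OF n] by auto
  next
    fix p assume p: "p \<in> {(1::nat,2::nat),(0,n-1),(0,2),(1,n-1)}"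
    then obtain x y where "p = (x,y)" "x < n" "y < n" "x < y" using n by auto
    then show "p \<in> UU n (transpose 0 1)" unfolding UU_def using swap_disc[OF n] p by auto
  qed
  then show ?thesis using n by simp
qed

theorem mainTheorem1:
  fixes n :: nat
  assumes "n \<ge> 5"
  shows "pi_graph {..<n} (co_cycle_adj n) = 4"
  unfolding pi_graph_def
proof (rule Least_equality)
  have p: "transpose 0 1 permutes {..<n}" using assms by (intro permutes_swap_id) auto
  show "0 < (4::nat) \<and> (\<exists>f. f permutes {..<n} \<and> delta_total {..<n} (co_cycle_adj n) f = 4)"
    using dt[OF assms p] swap_UU[OF assms] p by auto
next
  fix s assume "0 < s \<and> (\<exists>f. f permutes {..<n} \<and> delta_total {..<n} (co_cycle_adj n) f = s)"
  then obtain f where f: "f permutes {..<n}" and s: "s = card (UU n f)" "0 < s"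
    using dt[OF assms] by auto
  have "UU n f \<noteq> {}" using s by auto
  then have "card (UU n f) \<ge> 3" using three[OF assms f] by simp
  moreover have "even (card (UU n f))" using even_UU[OF f] .
  then obtain k where "card (UU n f) = 2 * k" by (elim evenE)
  ultimately show "4 \<le> s" using s by presburger
qed

end
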